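(* Let $m\ge 1$ and let $k_1,l_1,\dots,k_m,l_m\in\mathbb{Z}_{\ge 0}$ with $k_1\ge 1$ and $l_m\ge 1$. Put $L_0=0$, $L_i=l_1+\dots+l_i$, and write $L=L_m$. For $\lambda\in\mathbb{C}\setminus\mathbb{Z}_{\ge 1}$ let $$f(\{k_i,l_i\}_{i=1}^m;\lambda)=\sum_{n_1>n_2>\dots>n_{L}>0}\ \prod_{i=1}^m\frac{1}{n_{L_{i-1}+1}^{\,k_i}\,(n_{L_{i-1}+1}-\lambda)(n_{L_{i-1}+2}-\lambda)\cdots(n_{L_i}-\lambda)},$$ the sum over integers, where for $l_i=0$ the product of the factors $(n_r-\lambda)$, $L_{i-1}<r\le L_i$, is empty (so that, since then $L_{i-1}=L_i$, the factor $n_{L_{i-1}+1}^{k_i}$ is a power of the first index of the next block). For integers $n_1>\dots>n_L>0$ and $1\le j\le L$ set $$C_{n_j}^{n_1\dots n_L}=\frac{1}{n_1^{k_1}\,n_{L_1+1}^{k_2}\cdots n_{L_{m-1}+1}^{k_m}}\prod_{\substack{1\le i\le L\\ i\neq j}}\frac{1}{n_i-n_j}.$$ Then for every $\lambda\in\mathbb{C}\setminus\mathbb{Z}_{\ge1}$, $$f(\{k_i,l_i\}_{i=1}^m;\lambda)=\sum_{n=1}^\infty\left\{\sum_{j=1}^{L}\ \sum_{\substack{n_1>\dots>n_{j-1}>n>n_{j+1}>\dots>n_L>0}} C_{n}^{n_1\dots n_{j-1}\,n\,n_{j+1}\dots n_L}\right\}\frac{1}{n-\lambda},$$ where in the inner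 sum $n$ occupies the $j$-th position and the remaining $n_i$ range over integers.
   Context: This $f$ is the generating function (in the weight increase, via $\lambda$) of sums of multiple zeta values $\zeta(k_1,\dots,k_r)=\sum_{n_1>\dots>n_r>0}n_1^{-k_1}\cdots n_r^{-k_r}$; the series defining $f$ converges absolutely for $\lambda$ not a positive integer. *)

theory Defs
  imports "HOL-Analysis.Analysis"
begin

text \<open>Index tuples \<open>n_1 > n_2 > ... > n_L > 0\<close> are represented as lists \<open>xs\<close> of
  length \<open>L\<close>; \<open>n_r\<close> is \<open>xs ! (r - 1)\<close> (0-based list indexing).\<close>

definition Lsum :: "(nat \<Rightarrow> nat) \<Rightarrow> nat \<Rightarrow> nat" where
  "Lsum l i = (\<Sum>t = 1..i. l t)"

definition dec_tuples :: "nat \<Rightarrow> nat list set" where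
  "dec_tuples L = {xs. length xs = L \<and> sorted_wrt (>) xs \<and> (\<forall>x\<in>set xs. 0 < x)}"

definition f_term :: "(nat \<Rightarrow> nat) \<Rightarrow> (nat \<Rightarrow> nat) \<Rightarrow> nat \<Rightarrow> complex \<Rightarrow> nat list \<Rightarrow> complex" where
  "f_term k l m z xs =
     (\<Prod>i = 1..m. 1 / ((of_nat (xs ! Lsum l (i - 1))) ^ k i *
        (\<Prod>r \<in> {Lsum l (i - 1)..<Lsum l i}. (of_nat (xs ! r) - z))))"

definition f_mzv :: "(nat \<Rightarrow> nat) \<Rightarrow> (nat \<Rightarrow> nat) \<Rightarrow> nat \<Rightarrow> complex \<Rightarrow> complex" where
  "f_mzv k l m z = infsum (f_term k l m z) (dec_tuples (Lsum l m))"

text \<open>\<open>C_{n_j}^{n_1 ... n_L}\<close>, with \<open>j\<close> given 0-based (\<open>j < L\<close>).\<close>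
definition Ccoef :: "(nat \<Rightarrow> nat) \<Rightarrow> (nat \<Rightarrow> nat) \<Rightarrow> nat \<Rightarrow> nat list \<Rightarrow> nat \<Rightarrow> complex" where
  "Ccoef k l m xs j =
     (1 / (\<Prod>i = 1..m. (of_nat (xs ! Lsum l (i - 1))) ^ k i)) *
     (\<Prod>i \<in> {0..<Lsum l m} - {j}. 1 / (of_nat (xs ! i) - of_nat (xs ! j)))"

definition coef_rhs :: "(nat \<Rightarrow> nat) \<Rightarrow> (nat \<Rightarrow> nat) \<Rightarrow> nat \<Rightarrow> nat \<Rightarrow> complex" where
  "coef_rhs k l m n =
     (\<Sum>j < Lsum l m. infsum (\<lambda>xs. Ccoef k l m xs j)
                         {xs \<in> dec_tuples (Lsum l m). xs ! j = n})"

end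

theory Submission
  imports Defs
begin


lemma pf:
  fixes a :: "nat \<Rightarrow> complex"
  assumes "finite I" "I \<noteq> {}" "inj_on a I" "\<forall>i\<in>I. a i \<noteq> z"
  shows "(\<Prod>i\<in>I. 1/(a i - z)) = (\<Sum>j\<in>I. (\<Prod>i\<in>I-{j}. 1/(a i - a j)) * (1/(a j - z)))"
  using assms
proof (induction I arbitrary: z rule: finite_ne_induct)
  case (singleton x) then show ?case by simp
next
  case (insert x F)
  define c where "c j = (\<Prod>i\<in>F-{j}. 1/(a i - a j))" for j
  have injF: "inj_on a F" using insert.prems by (auto simp: inj_on_def)
  have ne: "\<forall>i\<in>F. a i \<noteq> a x" using insert.prems insert.hyps by (auto simp: inj_on_def)
  have nz: "\<forall>i\<in>F. a i \<noteq> z" "a x \<noteq> z" using insert.prems by auto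
  have IH1: "(\<Prod>i\<in>F. 1/(a i - z)) = (\<Sum>j\<in>F. c j * (1/(a j - z)))"
    using insert.IH[OF injF nz(1)] by (simp add: c_def)
  have IH2: "(\<Prod>i\<in>F. 1/(a i - a x)) = (\<Sum>j\<in>F. c j * (1/(a j - a x)))"
    using insert.IH[OF injF ne] by (simp add: c_def)
  have e1: "(\<Prod>i\<in>insert x F - {j}. 1/(a i - a j)) = 1/(a x - a j) * c j" if "j \<in> F" for j
  proof -
    have "insert x F - {j} = insert x (F - {j})" using that insert.hyps by auto
    then show ?thesis using insert.hyps by (simp add: c_def)
  qed
  have e2: "insert x F - {x} = F" using insert.hyps by auto
  have key: "1/(a x - a j) * c j * (1/(a j - z)) = 1/(a x - z) * (c j * (1/(a j - z)) - c j * (1/(a j - a x)))"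
    if "j \<in> F" for j
  proof -
    have h1: "a x - a j \<noteq> 0" "a j - z \<noteq> 0" "a x - z \<noteq> 0" "a j - a x \<noteq> 0"
      using ne nz that by auto
    have "1/(a x - a j) * (1/(a j - z)) = 1/(a x - z) * (1/(a j - z) - 1/(a j - a x))"
      using h1 by (simp add: divide_simps) (simp add: algebra_simps)
    then have "1/(a x - a j) * (1/(a j - z)) * c j = 1/(a x - z) * (1/(a j - z) - 1/(a j - a x)) * c j" by simp
    then show ?thesis by (simp add: algebra_simps)
  qed
  have "(\<Sum>j\<in>insert x F. (\<Prod>i\<in>insert x F-{j}. 1/(a i - a j)) * (1/(a j - z)))
      = (\<Prod>i\<in>F. 1/(a i - a x)) * (1/(a x - z)) + (\<Sum>j\<in>F. 1/(a x - a j) * c j * (1/(a j - z)))"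
    using insert.hyps by (simp add: e1 e2)
  also have "(\<Sum>j\<in>F. 1/(a x - a j) * c j * (1/(a j - z)))
      = (\<Sum>j\<in>F. 1/(a x - z) * (c j * (1/(a j - z)) - c j * (1/(a j - a x))))"
    by (intro sum.cong refl key)
  also have "\<dots> = 1/(a x - z) * ((\<Sum>j\<in>F. c j * (1/(a j - z))) - (\<Sum>j\<in>F. c j * (1/(a j - a x))))"
    by (simp only: sum_distrib_left[symmetric] sum_subtractf)
  finally show ?case using insert.hyps IH1 IH2 by (simp add: algebra_simps)
qed



lemma Lsum_0[simp]: "Lsum l 0 = 0" by (simp add: Lsum_def)
lemma Lsum_Suc: "Lsum l (Suc i) = Lsum l i + l (Suc i)" by (simp add: Lsum_def)
lemma Lsum_mono: "i \<le> j \<Longrightarrow> Lsum l i \<le> Lsum l j"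
  unfolding Lsum_def by (intro sum_mono2) auto

lemma prod_blocks:
  "(\<Prod>i=1..m. \<Prod>r\<in>{Lsum l (i-1)..<Lsum l i}. F r) = (\<Prod>r\<in>{0..<Lsum l m}. F r)"
proof (induction m)
  case 0 then show ?case by simp
next
  case (Suc m)
  have "(\<Prod>i=1..Suc m. \<Prod>r\<in>{Lsum l (i-1)..<Lsum l i}. F r)
     = (\<Prod>i=1..m. \<Prod>r\<in>{Lsum l (i-1)..<Lsum l i}. F r) * (\<Prod>r\<in>{Lsum l m..<Lsum l (Suc m)}. F r)"
    by (simp add: prod.cl_ivl_Suc)
  also have "\<dots> = (\<Prod>r\<in>{0..<Lsum l (Suc m)}. F r)"
    using Suc by (simp add: prod.atLeastLessThan_concat Lsum_mono)
  finally show ?case .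
qed

lemma f_term_eq:
  "f_term k l m z xs = (1 / (\<Prod>i = 1..m. (of_nat (xs ! Lsum l (i - 1))) ^ k i)) *
      (\<Prod>r\<in>{0..<Lsum l m}. 1 / (of_nat (xs ! r) - z))"
proof -
  have "f_term k l m z xs = (\<Prod>i = 1..m. 1 / (of_nat (xs ! Lsum l (i - 1))) ^ k i) *
      (\<Prod>i = 1..m. \<Prod>r \<in> {Lsum l (i - 1)..<Lsum l i}. 1 / (of_nat (xs ! r) - z))"
    unfolding f_term_def by (simp add: prod.distrib[symmetric] prod_dividef power_one_over)
  also have "\<dots> = (\<Prod>i = 1..m. 1 / (of_nat (xs ! Lsum l (i - 1))) ^ k i) *
      (\<Prod>r\<in>{0..<Lsum l m}. 1 / (of_nat (xs ! r) - z))"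
    by (simp only: prod_blocks)
  also have "(\<Prod>i = 1..m. 1 / (of_nat (xs ! Lsum l (i - 1)) :: complex) ^ k i)
     = 1 / (\<Prod>i = 1..m. (of_nat (xs ! Lsum l (i - 1))) ^ k i)"
    by (simp add: prod_dividef power_one_over)
  finally show ?thesis .
qed

lemma dec_tuples_inj:
  assumes "xs \<in> dec_tuples L"
  shows "inj_on (\<lambda>i. xs ! i) {0..<L}"
proof -
  have "sorted_wrt (>) xs" "length xs = L" using assms by (auto simp: dec_tuples_def)
  then show ?thesis unfolding inj_on_def
    by (metis atLeastLessThan_iff linorder_neqE_nat order_less_irrefl sorted_wrt_nth_less)
qed

lemma dec_tuples_pos:
  assumes "xs \<in> dec_tuples L" "i < L" shows "xs ! i > 0"
  using assms by (auto simp: dec_tuples_def)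

lemma f_term_split:
  assumes "xs \<in> dec_tuples (Lsum l m)" "Lsum l m > 0"
    and z: "\<forall>n::nat. n \<ge> 1 \<longrightarrow> z \<noteq> of_nat n"
  shows "f_term k l m z xs = (\<Sum>j<Lsum l m. Ccoef k l m xs j / (of_nat (xs ! j) - z))"
proof -
  define L where "L = Lsum l m"
  define a where "a i = (of_nat (xs ! i) :: complex)" for i
  have inj: "inj_on a {0..<L}"
    using dec_tuples_inj[OF assms(1)] unfolding L_def a_def inj_on_def by auto
  have nz: "\<forall>i\<in>{0..<L}. a i \<noteq> z"
  proof
    fix i assume "i \<in> {0..<L}"
    then have "xs ! i \<ge> 1" using dec_tuples_pos[OF assms(1)] L_def by (simp add: Suc_leI)
    then show "a i \<noteq> z" using z unfolding a_def by metis
  qed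
  have ne: "{0..<L} \<noteq> {}" using assms(2) L_def by auto
  note P = pf[OF _ ne inj nz]
  show ?thesis
    unfolding f_term_eq Ccoef_def L_def[symmetric] lessThan_atLeast0
    using P unfolding a_def
    by (simp add: sum_distrib_left algebra_simps)
qed



lemma z_bound:
  fixes z :: complex
  assumes z: "\<forall>n::nat. n \<ge> 1 \<longrightarrow> z \<noteq> of_nat n"
  shows "\<exists>c>0. \<forall>n::nat. n \<ge> 1 \<longrightarrow> real n \<le> c * cmod (of_nat n - z)"
proof -
  define N where "N = nat \<lceil>2 * cmod z\<rceil>"
  define c where "c = 2 + (\<Sum>n=1..N. real n / cmod (of_nat n - z))"
  have pos: "cmod (of_nat n - z) > 0" if "n \<ge> 1" for n :: nat
    using z that by auto
  have s0: "(\<Sum>n=1..N. real n / cmod (of_nat n - z)) \<ge> 0"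
    by (intro sum_nonneg) auto
  have "c > 0" using s0 c_def by simp
  moreover have "real n \<le> c * cmod (of_nat n - z)" if n: "n \<ge> 1" for n :: nat
  proof (cases "n \<le> N")
    case True
    have "real n / cmod (of_nat n - z) \<le> (\<Sum>n=1..N. real n / cmod (of_nat n - z))"
      using True n by (intro member_le_sum) auto
    also have "\<dots> \<le> c" using c_def by simp
    finally show ?thesis using pos[OF n] by (simp add: divide_le_eq)
  next
    case False
    then have "real n > 2 * cmod z" unfolding N_def by linarith
    moreover have "cmod (of_nat n - z) \<ge> real n - cmod z"
      by (metis norm_of_nat norm_triangle_ineq2)
    ultimately have "real n \<le> 2 * cmod (of_nat n - z)" by linarith
    also have "\<dots> \<le> c * cmod (of_nat n - z)"
      using s0 c_def by (intro mult_right_mono) auto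
    finally show ?thesis .
  qed
  ultimately show ?thesis by blast
qed

lemma lists_prod_has_sum:
  fixes w :: "nat \<Rightarrow> real"
  assumes w: "(w has_sum S) UNIV" and nn: "\<And>x. w x \<ge> 0"
  shows "((\<lambda>ys. prod_list (map w ys)) has_sum (S ^ L)) {ys. length ys = L}"
proof (induction L)
  case 0
  have "{ys :: nat list. length ys = 0} = {[]}" by auto
  then show ?case by (simp add: has_sum_finiteI)
next
  case (Suc L)
  define T where "T = {ys :: nat list. length ys = L}"
  have img: "{ys :: nat list. length ys = Suc L} = (\<lambda>(x,ys). x # ys) ` (UNIV \<times> T)"
    unfolding T_def by (auto simp: length_Suc_conv image_iff)
  have inj: "inj_on (\<lambda>(x,ys). x # ys) (UNIV \<times> T)" by (auto simp: inj_on_def)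
  have in1: "((\<lambda>ys. w x * prod_list (map w ys)) has_sum (w x * S ^ L)) T" for x
    using Suc.IH unfolding T_def by (rule has_sum_cmult_right)
  have out: "((\<lambda>x. w x * S ^ L) has_sum (S * S ^ L)) UNIV"
    using w by (rule has_sum_cmult_left)
  have nnP: "prod_list (map w ys) \<ge> 0" for ys
    by (rule prod_list_nonneg) (auto simp: nn)
  have summ: "(\<lambda>(x,ys). w x * prod_list (map w ys)) summable_on (UNIV \<times> T)"
    using summable_on_SigmaI[where f="\<lambda>(x,ys). w x * prod_list (map w ys)" and A=UNIV and B="\<lambda>_. T",
        OF _ has_sum_imp_summable[OF out]] in1 nn nnP by auto
  have "((\<lambda>(x,ys). w x * prod_list (map w ys)) has_sum (S * S ^ L)) (UNIV \<times> T)"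
    using has_sum_SigmaI[where f="\<lambda>(x,ys). w x * prod_list (map w ys)" and A=UNIV and B="\<lambda>_. T",
        OF _ out summ] in1 by auto
  then have "(((\<lambda>ys. prod_list (map w ys)) \<circ> (\<lambda>(x,ys). x # ys)) has_sum (S ^ Suc L)) (UNIV \<times> T)"
    by (simp add: o_def case_prod_unfold)
  then show ?case unfolding img using has_sum_reindex[OF inj] by blast
qed

definition wL :: "nat \<Rightarrow> nat \<Rightarrow> real" where
  "wL L v = real v powr (-(1 + 1 / real L))"

lemma wL_summable: "L > 0 \<Longrightarrow> wL L summable_on UNIV"
proof -
  assume "L > 0"
  then have "summable (\<lambda>v. real v powr (-(1 + 1 / real L)))"
    by (subst summable_real_powr_iff) auto
  then show ?thesis unfolding wL_def
    by (intro norm_summable_imp_summable_on) auto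
qed

lemma lists_wL_summable:
  "L > 0 \<Longrightarrow> (\<lambda>ys. prod_list (map (wL L) ys)) summable_on {ys. length ys = L}"
  using lists_prod_has_sum[of "wL L" _ L] wL_summable[of L]
  by (metis has_sum_imp_summable summable_iff_has_sum_infsum wL_def powr_nonneg_iff order_refl
        powr_ge_zero)



lemma bound_real:
  fixes y :: "nat \<Rightarrow> real" and X P :: real and L j :: nat
  assumes j: "j < L" and y: "\<forall>i<L. 1 \<le> y i \<and> y i \<le> X" and XP: "X \<le> P"
  shows "(1/P) * (\<Prod>i\<in>{0..<L}-{j}. 1/y i) / y j \<le> (\<Prod>i\<in>{0..<L}. y i powr (-(1+1/real L)))"
proof -
  define I where "I = {0..<L}"
  have X1: "X \<ge> 1" using y j by force
  have ypos: "\<And>i. i \<in> I \<Longrightarrow> y i > 0" using y I_def by force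
  have jI: "j \<in> I" using j I_def by simp
  have Lpos: "real L > 0" using j by simp
  have "(1/P) * (\<Prod>i\<in>I-{j}. 1/y i) / y j = (1/P) * (\<Prod>i\<in>I. 1/y i)"
    using prod.remove[OF _ jI, of "\<lambda>i. 1/y i"] I_def by (simp add: field_simps)
  also have "\<dots> \<le> (1/X) * (\<Prod>i\<in>I. 1/y i)"
    using X1 XP ypos by (intro mult_right_mono prod_nonneg) (auto simp: frac_le less_imp_le)
  also have "1/X = (\<Prod>i\<in>I. X powr (-1/real L))"
  proof -
    have "(\<Prod>i\<in>I. X powr (-1/real L)) = (X powr (-1/real L)) ^ L" using I_def by simp
    also have "\<dots> = X powr (real L * (-1/real L))"
      using X1 by (simp add: powr_realpow[symmetric] powr_powr mult.commute)
    also have "\<dots> = X powr (-1)" using Lpos by simp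
    also have "\<dots> = 1/X" using X1 by (simp add: powr_minus_divide)
    finally show ?thesis by simp
  qed
  also have "(\<Prod>i\<in>I. X powr (-1/real L)) * (\<Prod>i\<in>I. 1/y i)
      \<le> (\<Prod>i\<in>I. y i powr (-1/real L)) * (\<Prod>i\<in>I. 1/y i)"
  proof (intro mult_right_mono prod_mono conjI)
    fix i assume "i \<in> I"
    then show "0 \<le> X powr (-1/real L)" by simp
    show "X powr (-1/real L) \<le> y i powr (-1/real L)"
      using \<open>i \<in> I\<close> y I_def ypos by (intro powr_mono2') auto
  next
    show "0 \<le> (\<Prod>i\<in>I. 1/y i)"
      by (intro prod_nonneg) (metis less_imp_le ypos zero_le_divide_1_iff)
  qed
  also have "\<dots> = (\<Prod>i\<in>I. y i powr (-(1+1/real L)))"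
    unfolding prod.distrib[symmetric]
  proof (intro prod.cong refl)
    fix i assume "i \<in> I"
    then have "y i > 0" by (rule ypos)
    then show "y i powr (-1/real L) * (1/y i) = y i powr (-(1+1/real L))"
      by (simp add: powr_add powr_minus_divide diff_divide_distrib powr_diff)
  qed
  finally show ?thesis unfolding I_def .
qed



lemma dec_nth_less:
  assumes "xs \<in> dec_tuples L" "i < j" "j < L" shows "xs ! j < xs ! i"
  using assms sorted_wrt_nth_less[of "(>)" xs i j] by (auto simp: dec_tuples_def)

lemma dec_nth0_max:
  assumes "xs \<in> dec_tuples L" "i < L" shows "xs ! i \<le> xs ! 0"
  using dec_nth_less[OF assms(1), of 0 i] assms(2) by (cases i) auto

definition phi :: "nat list \<Rightarrow> nat \<Rightarrow> nat list" where
  "phi xs j = map (\<lambda>x. if x = xs ! j then x else if x > xs ! j then x - xs ! j else xs ! j - x) xs"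

lemma phi_length: "xs \<in> dec_tuples L \<Longrightarrow> length (phi xs j) = L"
  by (simp add: phi_def dec_tuples_def)

lemma phi_nth:
  assumes "xs \<in> dec_tuples L" "i < L" "j < L"
  shows "phi xs j ! i = (if i = j then xs ! j else if i < j then xs ! i - xs ! j else xs ! j - xs ! i)"
proof -
  have len: "length xs = L" using assms by (simp add: dec_tuples_def)
  show ?thesis
  proof (cases "i = j")
    case True then show ?thesis using len assms by (simp add: phi_def)
  next
    case False
    then consider "i < j" | "j < i" by linarith
    then show ?thesis
    proof cases
      case 1
      then have "xs ! j < xs ! i" using dec_nth_less assms by blast
      then show ?thesis using 1 len assms by (simp add: phi_def)
    next
      case 2
      then have "xs ! i < xs ! j" using dec_nth_less assms by blast
      then show ?thesis using 2 len assms by (simp add: phi_def)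
    qed
  qed
qed

lemma phi_inj:
  assumes j: "j < L" shows "inj_on (\<lambda>xs. phi xs j) (dec_tuples L)"
proof (rule inj_onI)
  fix xs ys assume xs: "xs \<in> dec_tuples L" and ys: "ys \<in> dec_tuples L" and eq: "phi xs j = phi ys j"
  have len: "length xs = L" "length ys = L" using xs ys by (auto simp: dec_tuples_def)
  have n: "xs ! j = ys ! j" using phi_nth[OF xs j j] phi_nth[OF ys j j] eq by simp
  show "xs = ys"
  proof (rule nth_equalityI)
    show "length xs = length ys" using len by simp
    fix i assume "i < length xs"
    then have i: "i < L" using len by simp
    have e: "phi xs j ! i = phi ys j ! i" using eq by simp
    consider "i = j" | "i < j" | "j < i" by linarith
    then show "xs ! i = ys ! i"
    proof cases
      case 1 then show ?thesis using n by simp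
    next
      case 2
      then have "xs ! j < xs ! i" "ys ! j < ys ! i" using dec_nth_less xs ys j by blast+
      then show ?thesis using e phi_nth[OF xs i j] phi_nth[OF ys i j] 2 n by simp
    next
      case 3
      then have "xs ! i < xs ! j" "ys ! i < ys ! j" using dec_nth_less xs ys i by blast+
      then show ?thesis using e phi_nth[OF xs i j] phi_nth[OF ys i j] 3 n by simp
    qed
  qed
qed

lemma Ccoef_bound:
  assumes m: "m \<ge> 1" and k1: "k 1 \<ge> 1" and lm: "l m \<ge> 1"
    and xs: "xs \<in> dec_tuples (Lsum l m)" and j: "j < Lsum l m"
  shows "cmod (Ccoef k l m xs j) / real (xs ! j) \<le> prod_list (map (wL (Lsum l m)) (phi xs j))"
proof -
  define L where "L = Lsum l m"
  define P where "P = (\<Prod>i = 1..m. (xs ! Lsum l (i - 1)) ^ k i)"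
  define y where "y i = real (phi xs j ! i)" for i
  have xsL: "xs \<in> dec_tuples L" and jL: "j < L" using xs j L_def by auto
  have lenx: "length xs = L" using xsL by (simp add: dec_tuples_def)
  have blk: "Lsum l (i - 1) < L" if "i \<in> {1..m}" for i
  proof -
    have "Lsum l (i - 1) \<le> Lsum l (m - 1)" using that by (intro Lsum_mono) auto
    moreover have "L = Lsum l (m - 1) + l m"
      using m Lsum_Suc[of l "m - 1"] L_def by simp
    ultimately show ?thesis using lm by simp
  qed
  have Ppos: "P > 0" unfolding P_def
    using blk dec_tuples_pos[OF xsL] by (intro prod_pos) auto
  have "xs ! 0 dvd P"
  proof -
    have "xs ! 0 dvd (xs ! Lsum l (1 - 1)) ^ k 1" using k1 by (simp add: dvd_power)
    also have "\<dots> dvd P" unfolding P_def using m by (intro dvd_prodI) auto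
    finally show ?thesis .
  qed
  then have x0P: "xs ! 0 \<le> P" using Ppos by (simp add: dvd_imp_le)
  have ybd: "\<forall>i<L. 1 \<le> y i \<and> y i \<le> real (xs ! 0)"
  proof (intro allI impI)
    fix i assume i: "i < L"
    have pi: "0 < xs ! i" "0 < xs ! j" using dec_tuples_pos[OF xsL] i jL by auto
    have mi: "xs ! i \<le> xs ! 0" "xs ! j \<le> xs ! 0" using dec_nth0_max[OF xsL] i jL by auto
    consider "i = j" | "i < j" | "j < i" by linarith
    then show "1 \<le> y i \<and> y i \<le> real (xs ! 0)"
    proof cases
      case 1 then show ?thesis using pi mi phi_nth[OF xsL i jL] y_def by simp
    next
      case 2
      then have "xs ! j < xs ! i" using dec_nth_less xsL jL by blast
      then show ?thesis using 2 pi mi phi_nth[OF xsL i jL] y_def by simp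
    next
      case 3
      then have "xs ! i < xs ! j" using dec_nth_less xsL i by blast
      then show ?thesis using 3 pi mi phi_nth[OF xsL i jL] y_def by simp
    qed
  qed
  have ydist: "cmod (of_nat (xs ! i) - of_nat (xs ! j)) = y i" if i: "i < L" "i \<noteq> j" for i
  proof -
    have "cmod (of_nat (xs ! i) - of_nat (xs ! j)) = \<bar>real (xs ! i) - real (xs ! j)\<bar>"
      by (metis norm_of_real of_real_diff of_real_of_nat_eq real_norm_def)
    also have "\<dots> = y i"
    proof (cases "i < j")
      case True
      then have "xs ! j < xs ! i" using dec_nth_less xsL jL by blast
      then show ?thesis using True phi_nth[OF xsL i(1) jL] y_def by simp
    next
      case False
      then have "xs ! i < xs ! j" using dec_nth_less xsL i that by (metis linorder_neqE_nat)
      then show ?thesis using False i phi_nth[OF xsL i(1) jL] y_def by simp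
    qed
    finally show ?thesis .
  qed
  have yj: "y j = real (xs ! j)" using phi_nth[OF xsL jL jL] y_def by simp
  have "Ccoef k l m xs j = (1 / of_nat P) * (\<Prod>i \<in> {0..<L} - {j}. 1 / (of_nat (xs ! i) - of_nat (xs ! j)))"
    unfolding Ccoef_def P_def L_def by simp
  then have "cmod (Ccoef k l m xs j) = (1 / real P) * (\<Prod>i \<in> {0..<L} - {j}. 1 / y i)"
    by (simp add: norm_mult norm_divide prod_norm[symmetric] ydist)
  then have "cmod (Ccoef k l m xs j) / real (xs ! j) = (1 / real P) * (\<Prod>i \<in> {0..<L} - {j}. 1 / y i) / y j"
    using yj by simp
  also have "\<dots> \<le> (\<Prod>i\<in>{0..<L}. y i powr (-(1+1/real L)))"
    using x0P by (intro bound_real[OF jL ybd]) simp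
  also have "\<dots> = prod_list (map (wL L) (phi xs j))"
    unfolding prod.list_conv_set_nth using phi_length[OF xsL]
    by (simp add: wL_def y_def)
  finally show ?thesis unfolding L_def .
qed



theorem lemma2p6:
  fixes k l :: "nat \<Rightarrow> nat" and m :: nat and z :: complex
  assumes "m \<ge> 1" and "k 1 \<ge> 1" and "l m \<ge> 1"
    and "\<forall>n::nat. n \<ge> 1 \<longrightarrow> z \<noteq> of_nat n"
  shows "(\<lambda>n. coef_rhs k l m (Suc n) / (of_nat (Suc n) - z)) sums f_mzv k l m z"
proof -
  note m = assms(1) and k1 = assms(2) and lm = assms(3) and zz = assms(4)
  define L where "L = Lsum l m"
  define D where "D = dec_tuples L"
  define J where "J = {..<L}"
  define g where "g p = Ccoef k l m (fst p) (snd p) / (of_nat (fst p ! snd p) - z)" for p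
  have Lpos: "L > 0"
    using m lm Lsum_Suc[of l "m - 1"] L_def by simp
  obtain c where c: "c > 0" "\<And>n::nat. n \<ge> 1 \<Longrightarrow> real n \<le> c * cmod (of_nat n - z)"
    using z_bound[OF zz] by blast
  define H where "H p = c * prod_list (map (wL L) (phi (fst p) (snd p)))" for p
  have wnn: "wL L v \<ge> 0" for v by (simp add: wL_def)
  have Hnn: "H p \<ge> 0" for p
    unfolding H_def using c(1) wnn by (intro mult_nonneg_nonneg prod_list_nonneg) auto
  have gH: "norm (g p) \<le> H p" if p: "p \<in> D \<times> J" for p
  proof -
    obtain xs j where pe: "p = (xs, j)" by (cases p)
    have xs: "xs \<in> dec_tuples (Lsum l m)" and j: "j < Lsum l m"
      using p pe D_def J_def L_def by auto
    have n1: "xs ! j \<ge> 1" using dec_tuples_pos[OF xs j] by simp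
    have cpos: "cmod (of_nat (xs ! j) - z) > 0" using zz n1 by auto
    have "norm (g p) = cmod (Ccoef k l m xs j) / cmod (of_nat (xs ! j) - z)"
      using pe g_def by (simp add: norm_divide)
    also have "\<dots> \<le> cmod (Ccoef k l m xs j) / (real (xs ! j) / c)"
    proof (rule divide_left_mono)
      show "real (xs ! j) / c \<le> cmod (of_nat (xs ! j) - z)"
        using c(2)[OF n1] c(1) by (simp add: divide_le_eq mult.commute)
      show "0 < cmod (of_nat (xs ! j) - z) * (real (xs ! j) / c)"
        using cpos n1 c(1) by simp
    qed simp
    also have "\<dots> = c * (cmod (Ccoef k l m xs j) / real (xs ! j))" by simp
    also have "\<dots> \<le> c * prod_list (map (wL (Lsum l m)) (phi xs j))"
      using Ccoef_bound[of m k l, OF m k1 lm xs j] c(1) by (intro mult_left_mono) auto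
    finally show ?thesis using pe H_def L_def by simp
  qed
  have Hj: "(\<lambda>xs. H (xs, j)) summable_on D" if j: "j \<in> J" for j
  proof -
    have "(\<lambda>ys. prod_list (map (wL L) ys)) summable_on {ys. length ys = L}"
      using lists_wL_summable[OF Lpos] .
    moreover have "(\<lambda>xs. phi xs j) ` D \<subseteq> {ys. length ys = L}"
      using phi_length D_def by auto
    ultimately have "(\<lambda>ys. prod_list (map (wL L) ys)) summable_on ((\<lambda>xs. phi xs j) ` D)"
      by (rule summable_on_subset_banach)
    then have "((\<lambda>ys. prod_list (map (wL L) ys)) \<circ> (\<lambda>xs. phi xs j)) summable_on D"
      using summable_on_reindex[OF phi_inj] j J_def D_def by auto
    then have "(\<lambda>xs. c * prod_list (map (wL L) (phi xs j))) summable_on D"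
      by (intro summable_on_cmult_right) (simp add: o_def)
    then show ?thesis by (simp add: H_def)
  qed
  have "(\<lambda>(j, xs). H (xs, j)) summable_on (J \<times> D)"
  proof (rule summable_on_SigmaI[where g = "\<lambda>j. infsum (\<lambda>xs. H (xs, j)) D"])
    show "((\<lambda>xs. case (j, xs) of (j, xs) \<Rightarrow> H (xs, j)) has_sum infsum (\<lambda>xs. H (xs, j)) D) D"
      if "j \<in> J" for j using Hj[OF that] by (simp add: has_sum_infsum)
    show "(\<lambda>j. infsum (\<lambda>xs. H (xs, j)) D) summable_on J" using J_def by simp
  qed (auto simp: Hnn)
  then have Hs: "H summable_on (D \<times> J)"
    by (subst summable_on_swap) (simp add: case_prod_unfold)
  have "(\<lambda>p. norm (g p)) summable_on (D \<times> J)"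
    using Hs gH by (rule summable_on_comparison_test) auto
  then have gs: "g summable_on (D \<times> J)" by (rule abs_summable_summable)
  define S where "S = infsum g (D \<times> J)"
  have gS: "(g has_sum S) (D \<times> J)" using gs S_def by (simp add: has_sum_infsum)
  have "((\<lambda>xs. \<Sum>j\<in>J. g (xs, j)) has_sum S) D"
    using has_sum_SigmaD[where B="\<lambda>_. J", OF gS] J_def by (simp add: has_sum_finiteI)
  then have "(f_term k l m z has_sum S) D"
  proof (rule has_sum_cong[THEN iffD1, rotated])
    fix xs assume "xs \<in> D"
    then show "(\<Sum>j\<in>J. g (xs, j)) = f_term k l m z xs"
      using f_term_split[of xs l m z k] Lpos zz unfolding D_def J_def L_def g_def by simp
  qed
  then have fS: "f_mzv k l m z = S" unfolding f_mzv_def D_def L_def by (rule infsumI)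
  define P where "P n = {p \<in> D \<times> J. fst p ! snd p = n}" for n
  define \<sigma> where "\<sigma> p = (fst p ! snd p, p)" for p :: "nat list \<times> nat"
  have inj\<sigma>: "inj_on \<sigma> (D \<times> J)" by (auto simp: inj_on_def \<sigma>_def)
  have img: "\<sigma> ` (D \<times> J) = Sigma UNIV P"
    by (auto simp: \<sigma>_def P_def image_iff)
  have "((\<lambda>q. g (snd q)) has_sum S) (\<sigma> ` (D \<times> J))"
    using has_sum_reindex[OF inj\<sigma>, of "\<lambda>q. g (snd q)" S] gS by (simp add: o_def \<sigma>_def)
  then have "((\<lambda>q. g (snd q)) has_sum S) (Sigma UNIV P)" using img by simp
  then have "((\<lambda>n. infsum g (P n)) has_sum S) UNIV"
  proof (rule has_sum_SigmaD)
    fix n :: nat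
    have "g summable_on P n" using gs by (rule summable_on_subset_banach) (auto simp: P_def)
    then show "((\<lambda>y. g (snd (n, y))) has_sum infsum g (P n)) (P n)" by (simp add: has_sum_infsum)
  qed
  then have sums0: "(\<lambda>n. infsum g (P n)) sums S" by (rule has_sum_imp_sums)
  have P0: "P 0 = {}"
    using dec_tuples_pos by (fastforce simp: P_def D_def J_def)
  have sums1: "(\<lambda>n. infsum g (P (Suc n))) sums S"
    using sums0 P0 by (subst sums_Suc_iff) simp
  have Pn: "infsum g (P n) = coef_rhs k l m n / (of_nat n - z)" for n
  proof -
    define B where "B j = {xs \<in> D. xs ! j = n}" for j
    have sw: "P n = prod.swap ` (Sigma J B)"
      by (auto simp: P_def B_def image_iff)
    have "infsum g (P n) = infsum (g \<circ> prod.swap) (Sigma J B)"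
      unfolding sw by (rule infsum_reindex) (simp add: inj_on_def)
    also have "\<dots> = infsum (\<lambda>j. infsum (\<lambda>xs. (g \<circ> prod.swap) (j, xs)) (B j)) J"
    proof (rule infsum_Sigma_banach[symmetric])
      have "g summable_on P n" using gs by (rule summable_on_subset_banach) (auto simp: P_def)
      then show "(g \<circ> prod.swap) summable_on (Sigma J B)"
        unfolding sw by (subst summable_on_reindex[symmetric]) (auto simp: inj_on_def)
    qed
    also have "\<dots> = (\<Sum>j\<in>J. infsum (\<lambda>xs. Ccoef k l m xs j) (B j) * (1 / (of_nat n - z)))"
    proof -
      have "infsum (\<lambda>xs. (g \<circ> prod.swap) (j, xs)) (B j) = infsum (\<lambda>xs. Ccoef k l m xs j * (1 / (of_nat n - z))) (B j)" for j
        by (rule infsum_cong) (simp add: g_def B_def)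
      moreover have "infsum (\<lambda>xs. Ccoef k l m xs j / (of_nat n - z)) (B j)
          = infsum (\<lambda>xs. Ccoef k l m xs j) (B j) / (of_nat n - z)" for j
        using infsum_cmult_left'[of "\<lambda>xs. Ccoef k l m xs j" "inverse (of_nat n - z)" "B j"]
        by (simp add: divide_inverse)
      ultimately show ?thesis using J_def by simp
    qed
    also have "\<dots> = coef_rhs k l m n / (of_nat n - z)"
      unfolding coef_rhs_def J_def B_def D_def L_def by (simp add: sum_divide_distrib)
    finally show ?thesis .
  qed
  show ?thesis using sums1 fS Pn by simp
qed


end
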